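(* For $c>0$ let $\mathfrak{C}_c$ be the catenoid of parameter $c$ described in the context and let $\Gamma_c=\mathfrak{C}_c\cap\{x_3=0\}$. Then, as $c\to+\infty$, $\Gamma_c$ converges uniformly to the origin, i.e. $\sup_{(x_1,x_2,0)\in\Gamma_c}\sqrt{x_1^2+x_2^2}\to0$.
   Context: $\widetilde{E(2)}$ is $\mathbb{R}^3$ with coordinates $(x_1,x_2,x_3)$ and group law $(a_1,b_1,c_1)*(a_2,b_2,c_2)=(a_1+a_2\cos c_1-b_2\sin c_1,\ b_1+a_2\sin c_1+b_2\cos c_1,\ c_1+c_2)$, with the left-invariant metric $\lambda_1^2(\cos x_3\,dx_1+\sin x_3\,dx_2)^2+\lambda_2^2(-\sin x_3\,dx_1+\cos x_3\,dx_2)^2+\frac{1}{\lambda_1^2\lambda_2^2}dx_3^2$, where either $\lambda_1>\lambda_2>0$ or $\lambda_1=\lambda_2=1$. For $c>0$: $\theta_c^+=\pi$ if $c>\sqrt2\lambda_1$, $\theta_c^+=\arccos(1-c^2/\lambda_1^2)$ if $0<c\le\sqrt2\lambda_1$; $\Omega=\{(c,\theta):c>0,\ |\theta|<\theta_c^+\}$. For $(c,\theta)\in\Omega$: $D=\sin\theta/c$; $\varphi$ is the global solution of $\varphi'(u)=\sqrt{c^2+2\cos\theta\,B(u)-D^2B(u)^2}$, $\varphi(0)=0$, with $B(u)=\lambda_1^2\cos^2\varphi(u)+\lambda_2^2\sin^2\varphi(u)$; $U>0$ is the unique number with $\varphi(U)=\pi$; $f$ solves $f'=DB$, $f(0)=0$;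 $G(u)=\int_0^u\frac{c-\varphi'(s)}{B(s)}ds$; $H(c,\theta)=Df(U)+cG(U)$; $\widetilde{\theta_c}$ is the unique $\theta\in(0,\pi/2)\cap(0,\theta_c^+)$ with $H(c,\theta)=0$. The catenoid $\mathfrak{C}_c$ is the image of $X=(x_1,x_2,x_3):\mathbb{C}\to\widetilde{E(2)}$ built with $\theta=\widetilde{\theta_c}$: $x_3(u+iv)=-\lambda_1\lambda_2Dv+\lambda_1\lambda_2G(u)$; with $A=f(u)+cv$, $M_1=c\cos x_3\cosh A-\lambda_1\lambda_2D\sin x_3\sinh A$, $M_2=c\cos x_3\sinh A-\lambda_1\lambda_2D\sin x_3\cosh A$, $M_3=c\sin x_3\sinh A+\lambda_1\lambda_2D\cos x_3\cosh A$, $M_4=c\sin x_3\cosh A+\lambda_1\lambda_2D\cos x_3\sinh A$, $x_1=-\frac{1}{(c^2+\lambda_1^2\lambda_2^2D^2)B}[\frac{1}{\lambda_1}f'\cos\varphi\,M_1-\frac{1}{\lambda_1}(c-\varphi')\sin\varphi\,M_2-\frac{1}{\lambda_2}(c-\varphi')\cos\varphi\,M_3-\frac{1}{\lambda_2}f'\sin\varphi\,M_4]$, $x_2=-\frac{1}{(c^2+\lambda_1^2\lambda_2^2D^2)B}[\frac{1}{\lambda_1}f'\cos\varphi\,M_4-\frac{1}{\lambda_1}(c-\varphi')\sin\varphi\,M_3+\frac{1}{\lambda_2}(c-\varphi')\cos\varphi\,M_2+\frac{1}{\lambda_2}f'\sin\varphi\,M_1]$ (functions of $u$ evaluated at $u$).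 *)

theory Defs
  imports "HOL-Analysis.Analysis"
begin

text \<open>Parameters l1 = lambda_1, l2 = lambda_2 of the left-invariant metric on the
universal cover of E(2). Points of the group are triples (x1, x2, x3).\<close>

definition theta_plus :: "real \<Rightarrow> real \<Rightarrow> real" where
  "theta_plus l1 c = (if c > sqrt 2 * l1 then pi else arccos (1 - c\<^sup>2 / l1\<^sup>2))"

definition in_Omega :: "real \<Rightarrow> real \<Rightarrow> real \<Rightarrow> bool" where
  "in_Omega l1 c \<theta> \<longleftrightarrow> c > 0 \<and> \<bar>\<theta>\<bar> < theta_plus l1 c"

definition Dc :: "real \<Rightarrow> real \<Rightarrow> real" where
  "Dc c \<theta> = sin \<theta> / c"

definition Bval :: "real \<Rightarrow> real \<Rightarrow> real \<Rightarrow> real" where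
  "Bval l1 l2 p = l1\<^sup>2 * (cos p)\<^sup>2 + l2\<^sup>2 * (sin p)\<^sup>2"

definition phi_rhs :: "real \<Rightarrow> real \<Rightarrow> real \<Rightarrow> real \<Rightarrow> real \<Rightarrow> real" where
  "phi_rhs l1 l2 c \<theta> p =
     sqrt (c\<^sup>2 + 2 * cos \<theta> * Bval l1 l2 p - (Dc c \<theta>)\<^sup>2 * (Bval l1 l2 p)\<^sup>2)"

definition phi :: "real \<Rightarrow> real \<Rightarrow> real \<Rightarrow> real \<Rightarrow> real \<Rightarrow> real" where
  "phi l1 l2 c \<theta> = (THE \<phi>. \<phi> 0 = 0 \<and>
      (\<forall>u. (\<phi> has_real_derivative phi_rhs l1 l2 c \<theta> (\<phi> u)) (at u)))"

definition Bfun :: "real \<Rightarrow> real \<Rightarrow> real \<Rightarrow> real \<Rightarrow> real \<Rightarrow> real" where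
  "Bfun l1 l2 c \<theta> u = Bval l1 l2 (phi l1 l2 c \<theta> u)"

definition phid :: "real \<Rightarrow> real \<Rightarrow> real \<Rightarrow> real \<Rightarrow> real \<Rightarrow> real" where
  "phid l1 l2 c \<theta> u = phi_rhs l1 l2 c \<theta> (phi l1 l2 c \<theta> u)"

definition Ucat :: "real \<Rightarrow> real \<Rightarrow> real \<Rightarrow> real \<Rightarrow> real" where
  "Ucat l1 l2 c \<theta> = (THE U. U > 0 \<and> phi l1 l2 c \<theta> U = pi)"

definition fcat :: "real \<Rightarrow> real \<Rightarrow> real \<Rightarrow> real \<Rightarrow> real \<Rightarrow> real" where
  "fcat l1 l2 c \<theta> = (THE f. f 0 = 0 \<and>
      (\<forall>u. (f has_real_derivative Dc c \<theta> * Bfun l1 l2 c \<theta> u) (at u)))"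

definition Gcat :: "real \<Rightarrow> real \<Rightarrow> real \<Rightarrow> real \<Rightarrow> real \<Rightarrow> real" where
  "Gcat l1 l2 c \<theta> u =
     (LBINT s=0..u. (c - phid l1 l2 c \<theta> s) / Bfun l1 l2 c \<theta> s)"

definition Hcat :: "real \<Rightarrow> real \<Rightarrow> real \<Rightarrow> real \<Rightarrow> real" where
  "Hcat l1 l2 c \<theta> = Dc c \<theta> * fcat l1 l2 c \<theta> (Ucat l1 l2 c \<theta>)
                     + c * Gcat l1 l2 c \<theta> (Ucat l1 l2 c \<theta>)"

definition theta_tilde :: "real \<Rightarrow> real \<Rightarrow> real \<Rightarrow> real" where
  "theta_tilde l1 l2 c = (THE \<theta>. 0 < \<theta> \<and> \<theta> < pi / 2 \<and> \<theta> < theta_plus l1 c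
                                  \<and> Hcat l1 l2 c \<theta> = 0)"

definition Xmap :: "real \<Rightarrow> real \<Rightarrow> real \<Rightarrow> real \<Rightarrow> complex \<Rightarrow> real \<times> real \<times> real" where
  "Xmap l1 l2 c \<theta> z =
    (let u = Re z; v = Im z; D = Dc c \<theta>;
         ph = phi l1 l2 c \<theta> u; ph' = phid l1 l2 c \<theta> u;
         B = Bfun l1 l2 c \<theta> u; f = fcat l1 l2 c \<theta> u; f' = D * B;
         x3 = - l1 * l2 * D * v + l1 * l2 * Gcat l1 l2 c \<theta> u;
         A = f + c * v;
         M1 = c * cos x3 * cosh A - l1 * l2 * D * sin x3 * sinh A;
         M2 = c * cos x3 * sinh A - l1 * l2 * D * sin x3 * cosh A;
         M3 = c * sin x3 * sinh A + l1 * l2 * D * cos x3 * cosh A;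
         M4 = c * sin x3 * cosh A + l1 * l2 * D * cos x3 * sinh A;
         N = (c\<^sup>2 + l1\<^sup>2 * l2\<^sup>2 * D\<^sup>2) * B;
         x1 = - (1 / N) * ((1 / l1) * f' * cos ph * M1 - (1 / l1) * (c - ph') * sin ph * M2
                           - (1 / l2) * (c - ph') * cos ph * M3 - (1 / l2) * f' * sin ph * M4);
         x2 = - (1 / N) * ((1 / l1) * f' * cos ph * M4 - (1 / l1) * (c - ph') * sin ph * M3
                           + (1 / l2) * (c - ph') * cos ph * M2 + (1 / l2) * f' * sin ph * M1)
     in (x1, x2, x3))"

definition catenoid :: "real \<Rightarrow> real \<Rightarrow> real \<Rightarrow> (real \<times> real \<times> real) set" where
  "catenoid l1 l2 c = range (Xmap l1 l2 c (theta_tilde l1 l2 c))"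

definition Gamma :: "real \<Rightarrow> real \<Rightarrow> real \<Rightarrow> (real \<times> real \<times> real) set" where
  "Gamma l1 l2 c = {p \<in> catenoid l1 l2 c. snd (snd p) = 0}"

end

theory Submission
  imports Defs
begin


definition prim :: "(real \<Rightarrow> real) \<Rightarrow> real \<Rightarrow> real" where
  "prim g x = (LBINT p=0..x. g p)"

lemma prim_0 [simp]: "prim g 0 = 0"
  by (simp add: prim_def zero_ereal_def)

lemma prim_deriv:
  assumes "continuous_on UNIV g"
  shows "(prim g has_real_derivative g x) (at x)"
proof -
  let ?a = "min 0 x - 1" and ?b = "max 0 x + 1"
  have "((\<lambda>u. LBINT y=0..u. g y) has_vector_derivative g x) (at x within {?a..?b})"
    using interval_integral_FTC2[of ?a 0 ?b g x] continuous_on_subset[OF assms]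
    by (simp add: zero_ereal_def)
  then have "((\<lambda>u. LBINT y=0..u. g y) has_vector_derivative g x) (at x within {?a<..<?b})"
    by (rule has_vector_derivative_within_subset) auto
  then have "((\<lambda>u. LBINT y=0..u. g y) has_vector_derivative g x) (at x)"
    by (subst (asm) has_vector_derivative_within_open) auto
  then show ?thesis unfolding prim_def has_real_derivative_iff_has_vector_derivative .
qed

lemma deriv_eq_imp_eq:
  fixes f g :: "real \<Rightarrow> real"
  assumes "\<And>x. (f has_real_derivative h x) (at x)"
    and "\<And>x. (g has_real_derivative h x) (at x)"
    and "f a = g a"
  shows "f x = g x"
proof -
  have "\<forall>x. ((\<lambda>x. f x - g x) has_real_derivative 0) (at x)"
    using DERIV_diff[OF assms(1) assms(2)] by fastforce
  then have "(\<lambda>x. f x - g x) x = (\<lambda>x. f x - g x) a" by (rule DERIV_isconst_all)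
  then show ?thesis using assms(3) by simp
qed

lemma deriv_mono:
  fixes f :: "real \<Rightarrow> real"
  assumes "\<And>x. (f has_real_derivative f' x) (at x)"
    and "\<And>x. f' x \<ge> 0" and "x \<le> y"
  shows "f x \<le> f y"
proof (rule DERIV_nonneg_imp_increasing_open[of x y f, OF assms(3)])
  show "\<And>z. x < z \<Longrightarrow> z < y \<Longrightarrow> \<exists>d. (f has_real_derivative d) (at z) \<and> 0 \<le> d"
    using assms by blast
  show "continuous_on {x..y} f"
    by (meson DERIV_continuous assms(1) continuous_at_imp_continuous_on)
qed

lemma prim_le_const:
  assumes "continuous_on UNIV g" and "\<And>p. g p \<le> P" and "x \<le> y"
  shows "prim g y - prim g x \<le> P * (y - x)"
proof -
  have "(\<lambda>z. P * z - prim g z) x \<le> (\<lambda>z. P * z - prim g z) y"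
  proof (rule deriv_mono[where f' = "\<lambda>z. P - g z" and f="\<lambda>z. P * z - prim g z"])
    fix z show "((\<lambda>z. P * z - prim g z) has_real_derivative P - g z) (at z)"
      using DERIV_diff[OF DERIV_cmult[OF DERIV_ident] prim_deriv[OF assms(1)]] by simp
  qed (use assms in auto)
  then show ?thesis by (simp add: algebra_simps)
qed

lemma prim_ge_const:
  assumes "continuous_on UNIV g" and "\<And>p. P \<le> g p" and "x \<le> y"
  shows "P * (y - x) \<le> prim g y - prim g x"
proof -
  have "(\<lambda>z. prim g z - P * z) x \<le> (\<lambda>z. prim g z - P * z) y"
  proof (rule deriv_mono[where f' = "\<lambda>z. g z - P" and f="\<lambda>z. prim g z - P * z"])
    fix z show "((\<lambda>z. prim g z - P * z) has_real_derivative g z - P) (at z)"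
      using DERIV_diff[OF prim_deriv[OF assms(1)] DERIV_cmult[OF DERIV_ident]] by simp
  qed (use assms in auto)
  then show ?thesis by (simp add: algebra_simps)
qed

lemma prim_mono:
  assumes "continuous_on UNIV g" "continuous_on UNIV h" and "\<And>p. g p \<le> h p" and "0 \<le> x"
  shows "prim g x \<le> prim h x"
proof -
  have "(\<lambda>z. prim h z - prim g z) 0 \<le> (\<lambda>z. prim h z - prim g z) x"
  proof (rule deriv_mono[where f' = "\<lambda>z. h z - g z" and f="\<lambda>z. prim h z - prim g z"])
    fix z show "((\<lambda>z. prim h z - prim g z) has_real_derivative h z - g z) (at z)"
      using DERIV_diff[OF prim_deriv[OF assms(2)] prim_deriv[OF assms(1)]] by simp
  qed (use assms in auto)
  then show ?thesis by simp
qed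



locale odeg =
  fixes g :: "real \<Rightarrow> real" and a b :: real
  assumes cont: "continuous_on UNIV g" and apos: "0 < a"
    and lower: "\<And>p. a \<le> g p" and upper: "\<And>p. g p \<le> b"
begin

definition "Psi = prim (\<lambda>p. 1 / g p)"

lemma gpos: "g p > 0" using apos lower[of p] by linarith

lemma gnz [simp]: "g p \<noteq> 0" using gpos[of p] by linarith

lemma cont_inv: "continuous_on UNIV (\<lambda>p. 1 / g p)"
  using cont gpos by (auto intro!: continuous_intros simp: less_imp_neq[symmetric])

lemma Psi_deriv: "(Psi has_real_derivative 1 / g x) (at x)"
  unfolding Psi_def by (rule prim_deriv[OF cont_inv])

lemma Psi_0 [simp]: "Psi 0 = 0" by (simp add: Psi_def)

lemma Psi_strict: "x < y \<Longrightarrow> Psi x < Psi y"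
proof (rule DERIV_pos_imp_increasing[of x y Psi])
  fix z show "\<exists>d. (Psi has_real_derivative d) (at z) \<and> 0 < d"
    using Psi_deriv[of z] gpos[of z] by auto
qed

lemma Psi_inj: "Psi x = Psi y \<Longrightarrow> x = y"
  by (metis Psi_strict linorder_neqE_linordered_idom order_less_irrefl)

lemma Psi_cont: "isCont Psi x"
  using Psi_deriv DERIV_isCont by blast

lemma bpos: "b > 0" using gpos[of 0] upper[of 0] by linarith

lemma Psi_lb: "0 \<le> x \<Longrightarrow> x / b \<le> Psi x"
proof -
  assume x: "0 \<le> x"
  have "(1/b) * (x - 0) \<le> Psi x - Psi 0"
    unfolding Psi_def
    by (rule prim_ge_const[OF cont_inv _ x])
       (use gpos upper bpos in \<open>auto simp: frac_le\<close>)
  then show ?thesis by simp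
qed

lemma Psi_ub: "x \<le> 0 \<Longrightarrow> Psi x \<le> x / b"
proof -
  assume x: "x \<le> 0"
  have "(1/b) * (0 - x) \<le> Psi 0 - Psi x"
    unfolding Psi_def
    by (rule prim_ge_const[OF cont_inv _ x])
       (use gpos upper bpos in \<open>auto simp: frac_le\<close>)
  then show ?thesis by (simp add: divide_simps)
qed

lemma Psi_surj: "\<exists>x. Psi x = u"
proof -
  have 1: "u \<le> Psi (\<bar>u\<bar> * b)" using Psi_lb[of "\<bar>u\<bar> * b"] bpos by simp
  have 2: "Psi (- \<bar>u\<bar> * b) \<le> u" using Psi_ub[of "- \<bar>u\<bar> * b"] bpos by simp
  have 3: "- \<bar>u\<bar> * b \<le> \<bar>u\<bar> * b" using bpos by simp
  have "\<exists>x. - \<bar>u\<bar> * b \<le> x \<and> x \<le> \<bar>u\<bar> * b \<and> Psi x = u"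
    by (rule IVT[OF 2 1 3]) (simp add: Psi_cont)
  then show ?thesis by blast
qed

definition "phi0 u = (SOME x. Psi x = u)"

lemma Psi_phi0 [simp]: "Psi (phi0 u) = u"
  unfolding phi0_def by (rule someI_ex[OF Psi_surj])

lemma phi0_Psi [simp]: "phi0 (Psi x) = x"
  using Psi_inj Psi_phi0 by blast

lemma phi0_0: "phi0 0 = 0"
  using phi0_Psi[of 0] by simp

lemma phi0_deriv: "(phi0 has_real_derivative g (phi0 u)) (at u)"
proof -
  have c: "isCont phi0 u"
    using isCont_inverse_function[of 1 "phi0 u" phi0 Psi] Psi_cont by simp
  have "(phi0 has_real_derivative inverse (1 / g (phi0 u))) (at u)"
    by (rule DERIV_inverse_function[where a="u-1" and b="u+1"])
       (use Psi_deriv gpos c in auto)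
  then show ?thesis by simp
qed

lemma sol_Psi:
  assumes "\<psi> 0 = 0" "\<And>u. (\<psi> has_real_derivative g (\<psi> u)) (at u)"
  shows "Psi (\<psi> u) = u"
proof (rule deriv_eq_imp_eq[where h="\<lambda>_. 1" and a=0 and f="\<lambda>u. Psi (\<psi> u)" and g="\<lambda>u. u"])
  fix x
  show "((\<lambda>u. Psi (\<psi> u)) has_real_derivative 1) (at x)"
    using DERIV_chain2[OF Psi_deriv assms(2)] by simp
qed (use assms in auto)

lemma sol_unique:
  assumes "\<psi> 0 = 0" "\<And>u. (\<psi> has_real_derivative g (\<psi> u)) (at u)"
  shows "\<psi> = phi0"
proof
  fix u show "\<psi> u = phi0 u" using sol_Psi[OF assms, of u] Psi_inj by (metis Psi_phi0)
qed

lemma the_sol: "(THE \<phi>. \<phi> 0 = 0 \<and> (\<forall>u. (\<phi> has_real_derivative g (\<phi> u)) (at u))) = phi0"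
proof (rule the_equality)
  show "phi0 0 = 0 \<and> (\<forall>u. (phi0 has_real_derivative g (phi0 u)) (at u))"
    using phi0_0 phi0_deriv by blast
  fix \<psi> assume "\<psi> 0 = 0 \<and> (\<forall>u. (\<psi> has_real_derivative g (\<psi> u)) (at u))"
  then show "\<psi> = phi0" using sol_unique by blast
qed

lemma phi0_strict: assumes "x < y" shows "phi0 x < phi0 y"
proof (rule ccontr)
  assume "\<not> phi0 x < phi0 y"
  then have "phi0 y < phi0 x \<or> phi0 y = phi0 x" by auto
  then have "Psi (phi0 y) \<le> Psi (phi0 x)" using Psi_strict by fastforce
  then show False using assms by simp
qed

end



definition Qf :: "real \<Rightarrow> real \<Rightarrow> real \<Rightarrow> real" where
  "Qf c b t = c\<^sup>2 + 2 * t * b - (1 - t\<^sup>2) * b\<^sup>2 / c\<^sup>2"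

definition Ft :: "real \<Rightarrow> real \<Rightarrow> real \<Rightarrow> real" where
  "Ft c b t = sqrt (Qf c b t)"

definition Kf :: "real \<Rightarrow> real \<Rightarrow> real \<Rightarrow> real" where
  "Kf c b t = (c\<^sup>2 + (1 - t\<^sup>2) * b\<^sup>2 / c\<^sup>2) / (b * Ft c b t) - c / b"

locale ptw =
  fixes c b :: real
  assumes bpos: "0 < b" and cb: "4 * b \<le> c\<^sup>2" and c1: "1 \<le> c"
begin

lemma cpos: "0 < c" using c1 by simp

lemma b2: "b\<^sup>2 / c\<^sup>2 \<le> c\<^sup>2 / 16"
proof -
  have "b\<^sup>2 \<le> (c\<^sup>2/4)\<^sup>2" using cb bpos by (intro power_mono) auto
  then have "b\<^sup>2 \<le> c\<^sup>2 * (c\<^sup>2 / 16)" by (simp add: power2_eq_square field_simps)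
  then show ?thesis using cpos by (simp add: divide_le_eq mult.commute)
qed

lemma b2': "b\<^sup>2 / c\<^sup>2 \<le> b"
proof -
  have "b\<^sup>2 \<le> b * c\<^sup>2" using cb bpos c1
    by (smt (verit) mult_le_cancel_left_pos power2_eq_square)
  then show ?thesis using cpos by (simp add: divide_le_eq)
qed

lemma Q_lb: "0 \<le> t \<Longrightarrow> t \<le> 1 \<Longrightarrow> c\<^sup>2 / 4 \<le> Qf c b t"
proof -
  assume t: "0 \<le> t" "t \<le> 1"
  have "(1 - t\<^sup>2) * b\<^sup>2 \<le> 1 * b\<^sup>2"
    using t by (intro mult_right_mono) auto
  then have "(1 - t\<^sup>2) * b\<^sup>2 / c\<^sup>2 \<le> b\<^sup>2 / c\<^sup>2"
    by (intro divide_right_mono) auto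
  moreover have "0 \<le> 2 * t * b" using t bpos by simp
  ultimately show ?thesis using b2 zero_le_power2[of c] unfolding Qf_def by linarith
qed

lemma Q_ub: "0 \<le> t \<Longrightarrow> t \<le> 1 \<Longrightarrow> Qf c b t \<le> 4 * c\<^sup>2"
proof -
  assume t: "0 \<le> t" "t \<le> 1"
  have "0 \<le> (1 - t\<^sup>2) * b\<^sup>2 / c\<^sup>2" using t by (simp add: power_le_one)
  moreover have "2 * t * b \<le> 2 * b" using t bpos by (simp add: mult_left_le_one_le)
  ultimately show ?thesis unfolding Qf_def using cb zero_le_power2[of c] by linarith
qed

lemma F_lb: "0 \<le> t \<Longrightarrow> t \<le> 1 \<Longrightarrow> c / 2 \<le> Ft c b t"
  unfolding Ft_def using Q_lb cpos
  by (intro real_le_rsqrt) (simp add: power_divide)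

lemma F_ub: "0 \<le> t \<Longrightarrow> t \<le> 1 \<Longrightarrow> Ft c b t \<le> 2 * c"
  unfolding Ft_def using Q_ub Q_lb cpos
  by (intro real_le_lsqrt) (auto simp: power_mult_distrib)

lemma F_pos: "0 \<le> t \<Longrightarrow> t \<le> 1 \<Longrightarrow> 0 < Ft c b t"
  using F_lb cpos by (meson half_gt_zero less_le_trans)

lemma F_sq: "0 \<le> t \<Longrightarrow> t \<le> 1 \<Longrightarrow> (Ft c b t)\<^sup>2 = Qf c b t"
  unfolding Ft_def using Q_lb cpos
  by (intro real_sqrt_pow2) (smt (verit) zero_le_power2 divide_nonneg_pos)

lemma c_minus_F: "0 \<le> t \<Longrightarrow> t \<le> 1 \<Longrightarrow>
   c - Ft c b t = ((1 - t\<^sup>2) * b\<^sup>2 / c\<^sup>2 - 2 * t * b) / (c + Ft c b t)"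
proof -
  assume t: "0 \<le> t" "t \<le> 1"
  have pos: "c + Ft c b t > 0" using F_pos[OF t] cpos by simp
  have "(c - Ft c b t) * (c + Ft c b t) = c\<^sup>2 - (Ft c b t)\<^sup>2"
    by (simp add: power2_eq_square algebra_simps)
  also have "\<dots> = (1 - t\<^sup>2) * b\<^sup>2 / c\<^sup>2 - 2 * t * b" using F_sq[OF t] by (simp add: Qf_def)
  finally show ?thesis using pos by (simp add: eq_divide_eq)
qed

lemma K_mono:
  assumes t: "0 \<le> t1" "t1 < t2" "t2 \<le> 1"
  shows "(t2 - t1) / (8 * c) \<le> Kf c b t1 - Kf c b t2"
proof -
  define F1 where "F1 = Ft c b t1"
  define F2 where "F2 = Ft c b t2"
  define E1 where "E1 = c\<^sup>2 + (1 - t1\<^sup>2) * b\<^sup>2 / c\<^sup>2"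
  define E2 where "E2 = c\<^sup>2 + (1 - t2\<^sup>2) * b\<^sup>2 / c\<^sup>2"
  have t1': "0 \<le> t1" "t1 \<le> 1" and t2': "0 \<le> t2" "t2 \<le> 1" using t by auto
  have F1b: "c/2 \<le> F1" "F1 \<le> 2*c" using F_lb[OF t1'] F_ub[OF t1'] by (auto simp: F1_def)
  have F2b: "c/2 \<le> F2" "F2 \<le> 2*c" using F_lb[OF t2'] F_ub[OF t2'] by (auto simp: F2_def)
  have F1p: "0 < F1" and F2p: "0 < F2" using F1b F2b cpos by auto
  have "0 \<le> (1 - t2\<^sup>2) * b\<^sup>2 / c\<^sup>2" using t2' by (simp add: power_le_one)
  then have E2c: "c\<^sup>2 \<le> E2" by (simp add: E2_def)
  have E2p: "0 \<le> E2" using E2c zero_le_power2[of c] by linarith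
  have "t1\<^sup>2 \<le> t2\<^sup>2" using t by (intro power_mono) auto
  then have "(1 - t2\<^sup>2) * b\<^sup>2 \<le> (1 - t1\<^sup>2) * b\<^sup>2" by (intro mult_right_mono) auto
  then have "(1 - t2\<^sup>2) * b\<^sup>2 / c\<^sup>2 \<le> (1 - t1\<^sup>2) * b\<^sup>2 / c\<^sup>2" by (intro divide_right_mono) auto
  then have E12: "E2 \<le> E1" by (simp add: E1_def E2_def)
  have "F2\<^sup>2 - F1\<^sup>2 = 2 * b * (t2 - t1) + (E1 - E2)"
    using F_sq[OF t1'] F_sq[OF t2'] unfolding F1_def F2_def E1_def E2_def Qf_def
    by (simp add: algebra_simps)
  then have sq: "2 * b * (t2 - t1) \<le> F2\<^sup>2 - F1\<^sup>2" using E12 by linarith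
  have "F2 - F1 = (F2\<^sup>2 - F1\<^sup>2) / (F2 + F1)"
    using F1p F2p by (simp add: power2_eq_square field_simps)
  also have "(2 * b * (t2 - t1)) / (4 * c) \<le> \<dots>"
  proof (rule frac_le)
    have "0 \<le> 2 * b * (t2 - t1)" using bpos t by simp
    then show "0 \<le> F2\<^sup>2 - F1\<^sup>2" using sq by linarith
    show "2 * b * (t2 - t1) \<le> F2\<^sup>2 - F1\<^sup>2" by (rule sq)
    show "0 < F2 + F1" using F1p F2p by simp
    show "F2 + F1 \<le> 4 * c" using F1b F2b by simp
  qed
  finally have dF: "b * (t2 - t1) / (2 * c) \<le> F2 - F1" by simp
  have "Kf c b t1 - Kf c b t2 = E1 / (b * F1) - E2 / (b * F2)"
    by (simp add: Kf_def E1_def E2_def F1_def F2_def)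
  also have "\<dots> \<ge> E2 / (b * F1) - E2 / (b * F2)"
    using E12 bpos F1p by (simp add: divide_right_mono)
  also have "E2 / (b * F1) - E2 / (b * F2) = (E2 * (F2 - F1)) / (b * (F1 * F2))"
    using bpos F1p F2p by (simp add: field_simps)
  also have "(c\<^sup>2 * (b * (t2 - t1) / (2 * c))) / (b * (4 * c\<^sup>2)) \<le> \<dots>"
  proof (rule frac_le)
    show "0 \<le> E2 * (F2 - F1)" using E2c dF bpos t cpos
      by (smt (verit) divide_nonneg_pos mult_nonneg_nonneg zero_le_power2[of c])
    show "c\<^sup>2 * (b * (t2 - t1) / (2 * c)) \<le> E2 * (F2 - F1)"
      using E2c E2p dF bpos t cpos by (intro mult_mono) auto
    show "0 < b * (F1 * F2)" using bpos F1p F2p by simp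
    have "F1 * F2 \<le> (2 * c) * (2 * c)" using F1b F2b F1p F2p by (intro mult_mono) auto
    then show "b * (F1 * F2) \<le> b * (4 * c\<^sup>2)" using bpos by (simp add: power2_eq_square)
  qed
  also have "(c\<^sup>2 * (b * (t2 - t1) / (2 * c))) / (b * (4 * c\<^sup>2)) = (t2 - t1) / (8 * c)"
    using bpos cpos by (simp add: field_simps power2_eq_square)
  finally show ?thesis .
qed

lemma K0_pos: "b / c ^ 3 \<le> Kf c b 0"
proof -
  have F0: "Ft c b 0 \<le> c"
    unfolding Ft_def Qf_def using cpos by (intro real_le_lsqrt) auto
  have F0p: "0 < Ft c b 0" using F_pos[of 0] by simp
  have "(c\<^sup>2 + b\<^sup>2 / c\<^sup>2) / (b * c) \<le> (c\<^sup>2 + b\<^sup>2 / c\<^sup>2) / (b * Ft c b 0)"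
    using F0 F0p bpos cpos by (intro divide_left_mono) (auto intro: add_nonneg_nonneg)
  moreover have "(c\<^sup>2 + b\<^sup>2 / c\<^sup>2) / (b * c) - c / b = b / c ^ 3"
    using bpos cpos by (simp add: field_simps power2_eq_square power3_eq_cube)
  ultimately show ?thesis by (simp add: Kf_def)
qed

lemma K1_neg: "Kf c b 1 \<le> - 1 / (3 * c)"
proof -
  define F where "F = Ft c b 1"
  have Fb: "c/2 \<le> F" "F \<le> 2*c" using F_lb[of 1] F_ub[of 1] by (auto simp: F_def)
  have Fp: "0 < F" using Fb cpos by auto
  have cF: "c - F = - 2 * b / (c + F)" using c_minus_F[of 1] by (simp add: F_def)
  have cFp: "c + F \<noteq> 0" using Fp cpos by simp
  have "Kf c b 1 = c * (c - F) / (b * F)"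
    using bpos Fp by (simp add: Kf_def F_def field_simps power2_eq_square)
  also have "\<dots> = c * (- 2 * b / (c + F)) / (b * F)" by (simp add: cF)
  also have "\<dots> = - (2 * c) / (F * (c + F))"
    using bpos Fp cpos by (simp add: divide_simps)
  also have "\<dots> \<le> - (2 * c) / (6 * c\<^sup>2)"
  proof -
    have "F * (c + F) \<le> (2 * c) * (3 * c)" using Fb Fp cpos by (intro mult_mono) auto
    then have "(2 * c) / (6 * c\<^sup>2) \<le> (2 * c) / (F * (c + F))"
      using Fp cpos by (intro divide_left_mono) (auto simp: power2_eq_square)
    then show ?thesis by simp
  qed
  also have "- (2 * c) / (6 * c\<^sup>2) = - 1 / (3 * c)"
    using cpos by (simp add: field_simps power2_eq_square)
  finally show ?thesis .
qed

lemma K_ub: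
  assumes t: "0 \<le> t" "t \<le> 1"
  shows "Kf c b t \<le> 4 * (1 - t\<^sup>2) * b / c ^ 3"
proof -
  define F where "F = Ft c b t"
  define X where "X = (1 - t\<^sup>2) * b\<^sup>2 / c\<^sup>2"
  have Fb: "c/2 \<le> F" "F \<le> 2*c" using F_lb[OF t] F_ub[OF t] by (auto simp: F_def)
  have Fp: "0 < F" using Fb cpos by auto
  have X0: "0 \<le> X" using t by (simp add: X_def power_le_one)
  have cF: "c - F = (X - 2 * t * b) / (c + F)" using c_minus_F[OF t] by (simp add: F_def X_def)
  have "c * (c - F) \<le> X"
  proof -
    have "c * (c - F) = (c / (c + F)) * (X - 2 * t * b)" using cF by simp
    also have "\<dots> \<le> X"
    proof (cases "0 \<le> X - 2 * t * b")
      case True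
      have "c / (c + F) * (X - 2 * t * b) \<le> X - 2 * t * b"
        using True Fp cpos by (intro mult_left_le_one_le) auto
      also have "\<dots> \<le> X" using t bpos by simp
      finally show ?thesis .
    next
      case False
      have "c / (c + F) * (X - 2 * t * b) \<le> 0"
        using False Fp cpos by (intro mult_nonneg_nonpos) auto
      then show ?thesis using X0 by linarith
    qed
    finally show ?thesis .
  qed
  then have num: "c\<^sup>2 + X - c * F \<le> 2 * X" by (simp add: algebra_simps power2_eq_square)
  have "Kf c b t = (c\<^sup>2 + X - c * F) / (b * F)"
    using bpos Fp by (simp add: Kf_def F_def X_def field_simps)
  also have "\<dots> \<le> 2 * X / (b * F)"
    using num bpos Fp by (intro divide_right_mono) auto
  also have "\<dots> \<le> 2 * X / (b * (c / 2))"
    using X0 bpos Fb cpos by (intro divide_left_mono) auto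
  also have "\<dots> = 4 * (1 - t\<^sup>2) * b / c ^ 3"
    using bpos cpos by (simp add: X_def field_simps power2_eq_square power3_eq_cube)
  finally show ?thesis .
qed

lemma cF_abs:
  assumes t: "0 \<le> t" "t \<le> 1" and bc: "b \<le> c\<^sup>2"
  shows "\<bar>c - Ft c b t\<bar> \<le> 3 * b / c"
proof -
  define F where "F = Ft c b t"
  define X where "X = (1 - t\<^sup>2) * b\<^sup>2 / c\<^sup>2"
  have Fp: "0 < F" using F_pos[OF t] by (simp add: F_def)
  have X0: "0 \<le> X" using t by (simp add: X_def power_le_one)
  have "(1 - t\<^sup>2) * b\<^sup>2 \<le> 1 * b\<^sup>2" using t by (intro mult_right_mono) auto
  then have "X \<le> b\<^sup>2 / c\<^sup>2" unfolding X_def by (intro divide_right_mono) auto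
  then have X1: "X \<le> b" using b2' by linarith
  have tb: "0 \<le> 2 * t * b" "2 * t * b \<le> 2 * b" using t bpos by (auto simp: mult_left_le_one_le)
  have cF: "c - F = (X - 2 * t * b) / (c + F)" using c_minus_F[OF t] by (simp add: F_def X_def)
  have "\<bar>c - F\<bar> = \<bar>X - 2 * t * b\<bar> / (c + F)" using cF Fp cpos by simp
  also have "\<dots> \<le> (3 * b) / c"
  proof (rule frac_le)
    have "- (3 * b) \<le> X - 2 * t * b" "X - 2 * t * b \<le> 3 * b" using X0 X1 tb bpos by linarith+
    then show "\<bar>X - 2 * t * b\<bar> \<le> 3 * b" by (simp add: abs_le_iff)
  qed (use Fp cpos bpos in auto)
  finally show ?thesis by (simp add: F_def)
qed

end



lemma Bval_alt: "Bval l1 l2 p = l2\<^sup>2 + (l1\<^sup>2 - l2\<^sup>2) * (cos p)\<^sup>2"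
  unfolding Bval_def by (simp add: sin_squared_eq algebra_simps)

lemma Bval_periodic: "Bval l1 l2 (p + pi) = Bval l1 l2 p"
  unfolding Bval_def by simp

lemma Bval_cont: "continuous_on UNIV (Bval l1 l2)"
  unfolding Bval_def by (intro continuous_intros)

locale setting =
  fixes l1 l2 c \<theta> :: real
  assumes l2pos: "0 < l2" and l21: "l2 \<le> l1" and c1: "1 \<le> c"
    and cL: "4 * l1\<^sup>2 \<le> c\<^sup>2" and cos0: "0 \<le> cos \<theta>"
begin

abbreviation "B \<equiv> Bval l1 l2"
abbreviation "t \<equiv> cos \<theta>"
abbreviation "D \<equiv> Dc c \<theta>"

lemma cpos: "0 < c" using c1 by simp

lemma B_lb: "l2\<^sup>2 \<le> B p"
proof -
  have "l2\<^sup>2 \<le> l1\<^sup>2" using l2pos l21 by (intro power_mono) auto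
  then show ?thesis unfolding Bval_alt by simp
qed

lemma B_ub: "B p \<le> l1\<^sup>2"
proof -
  have "l2\<^sup>2 \<le> l1\<^sup>2" using l2pos l21 by (intro power_mono) auto
  moreover have "(cos p)\<^sup>2 \<le> 1" using abs_cos_le_one[of p] by (simp add: abs_square_le_1)
  ultimately have "(l1\<^sup>2 - l2\<^sup>2) * (cos p)\<^sup>2 \<le> (l1\<^sup>2 - l2\<^sup>2) * 1"
    by (intro mult_left_mono) auto
  then show ?thesis unfolding Bval_alt by simp
qed

lemma B_pos: "0 < B p"
  using B_lb[of p] l2pos by (smt (verit) zero_less_power)

lemma Bnz [simp]: "B p \<noteq> 0" using B_pos[of p] by simp

lemma ptwB: "ptw c (B p)"
  using B_pos[of p] B_ub[of p] cL c1 by unfold_locales auto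

lemma t01: "0 \<le> t" "t \<le> 1" using cos0 by auto

lemma rhs_eq: "phi_rhs l1 l2 c \<theta> p = Ft c (B p) t"
proof -
  have "(Dc c \<theta>)\<^sup>2 * (B p)\<^sup>2 = (1 - t\<^sup>2) * (B p)\<^sup>2 / c\<^sup>2"
    unfolding Dc_def by (simp add: power_divide sin_squared_eq)
  then show ?thesis unfolding phi_rhs_def Ft_def Qf_def by simp
qed

abbreviation "g \<equiv> phi_rhs l1 l2 c \<theta>"

lemma g_lb: "c / 2 \<le> g p" using ptw.F_lb[OF ptwB t01] rhs_eq by simp
lemma g_ub: "g p \<le> 2 * c" using ptw.F_ub[OF ptwB t01] rhs_eq by simp

lemma g_cont: "continuous_on UNIV g"
  unfolding phi_rhs_def Bval_def by (intro continuous_intros)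

sublocale odeg g "c/2" "2*c"
  using g_cont g_lb g_ub cpos by unfold_locales auto

lemma phi_eq: "phi l1 l2 c \<theta> = phi0"
  unfolding phi_def using the_sol by simp

lemma phid_eq: "phid l1 l2 c \<theta> u = g (phi0 u)"
  unfolding phid_def phi_eq ..

lemma Bfun_eq: "Bfun l1 l2 c \<theta> u = B (phi0 u)"
  unfolding Bfun_def phi_eq ..

lemma phi0_cont: "continuous_on UNIV phi0"
  by (meson DERIV_isCont phi0_deriv continuous_at_imp_continuous_on)

lemma Ucat_eq: "Ucat l1 l2 c \<theta> = Psi pi"
  unfolding Ucat_def phi_eq
proof (rule the_equality)
  show "0 < Psi pi \<and> phi0 (Psi pi) = pi" using Psi_strict[of 0 pi] by simp
  fix U assume "0 < U \<and> phi0 U = pi"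
  then show "U = Psi pi" using Psi_phi0[of U] by simp
qed

definition "h1 p = B p / g p"
definition "h2 p = (c - g p) / (B p * g p)"
definition "kk p = Kf c (B p) t"

lemma h1_cont: "continuous_on UNIV h1"
  unfolding h1_def by (intro continuous_intros Bval_cont g_cont) auto

lemma h2_cont: "continuous_on UNIV h2"
  unfolding h2_def by (intro continuous_intros Bval_cont g_cont) auto

lemma kk_eq: "kk p = D\<^sup>2 * h1 p + c * h2 p"
proof -
  have Dsq: "D\<^sup>2 = (1 - t\<^sup>2) / c\<^sup>2" unfolding Dc_def by (simp add: power_divide sin_squared_eq)
  show ?thesis
    unfolding Dsq kk_def Kf_def h1_def h2_def rhs_eq[symmetric]
    using cpos gpos[of p] B_pos[of p]
    by (simp add: field_simps power2_eq_square)
qed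

lemma kk_cont: "continuous_on UNIV kk"
  unfolding kk_eq[abs_def] by (intro continuous_intros h1_cont h2_cont)

lemma prim_kk: "prim kk x = D\<^sup>2 * prim h1 x + c * prim h2 x"
proof (rule deriv_eq_imp_eq[where a=0 and h=kk and f="prim kk" and g="\<lambda>x. D\<^sup>2 * prim h1 x + c * prim h2 x"])
  fix x show "(prim kk has_real_derivative kk x) (at x)" by (rule prim_deriv[OF kk_cont])
  show "((\<lambda>x. D\<^sup>2 * prim h1 x + c * prim h2 x) has_real_derivative kk x) (at x)"
    unfolding kk_eq
    by (intro derivative_eq_intros prim_deriv[OF h1_cont] prim_deriv[OF h2_cont])
       (auto intro: prim_deriv[OF h1_cont] prim_deriv[OF h2_cont])
qed simp

lemma fcat_eq: "fcat l1 l2 c \<theta> = (\<lambda>u. D * prim h1 (phi0 u))"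
  unfolding fcat_def Bfun_eq
proof (rule the_equality)
  have "((\<lambda>u. D * prim h1 (phi0 u)) has_real_derivative D * B (phi0 u)) (at u)" for u
  proof -
    have "((\<lambda>u. D * prim h1 (phi0 u)) has_real_derivative D * (h1 (phi0 u) * g (phi0 u))) (at u)"
      by (intro DERIV_cmult DERIV_chain2[OF prim_deriv[OF h1_cont] phi0_deriv])
    then show ?thesis unfolding h1_def by simp
  qed
  then show "(\<lambda>u. D * prim h1 (phi0 u)) 0 = 0 \<and>
    (\<forall>u. ((\<lambda>u. D * prim h1 (phi0 u)) has_real_derivative D * B (phi0 u)) (at u))"
    using phi0_0 by simp
  fix f assume f: "f 0 = 0 \<and> (\<forall>u. (f has_real_derivative D * B (phi0 u)) (at u))"
  show "f = (\<lambda>u. D * prim h1 (phi0 u))"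
  proof
    fix x show "f x = D * prim h1 (phi0 x)"
      by (rule deriv_eq_imp_eq[where a=0 and h="\<lambda>u. D * B (phi0 u)" and f=f and g="\<lambda>u. D * prim h1 (phi0 u)"])
         (use f \<open>\<And>u. ((\<lambda>u. D * prim h1 (phi0 u)) has_real_derivative D * B (phi0 u)) (at u)\<close> phi0_0 in auto)
  qed
qed

definition "h3 s = (c - g (phi0 s)) / B (phi0 s)"

lemma h3_cont: "continuous_on UNIV h3"
proof -
  have "continuous_on UNIV (\<lambda>p. (c - g p) / B p)"
    by (intro continuous_intros Bval_cont g_cont) auto
  from continuous_on_compose2[OF this phi0_cont] show ?thesis
    unfolding h3_def by simp
qed

lemma Gcat_eq: "Gcat l1 l2 c \<theta> u = prim h2 (phi0 u)"
proof -
  have "Gcat l1 l2 c \<theta> u = prim h3 u"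
    unfolding Gcat_def prim_def h3_def phid_eq Bfun_eq ..
  also have "\<dots> = prim h2 (phi0 u)"
  proof (rule deriv_eq_imp_eq[where a=0 and h=h3 and f="prim h3" and g="\<lambda>u. prim h2 (phi0 u)"])
    fix x show "(prim h3 has_real_derivative h3 x) (at x)" by (rule prim_deriv[OF h3_cont])
    have "((\<lambda>u. prim h2 (phi0 u)) has_real_derivative h2 (phi0 x) * g (phi0 x)) (at x)"
      by (rule DERIV_chain2[OF prim_deriv[OF h2_cont] phi0_deriv])
    then show "((\<lambda>u. prim h2 (phi0 u)) has_real_derivative h3 x) (at x)"
      unfolding h2_def h3_def by simp
  qed (simp add: phi0_0)
  finally show ?thesis .
qed

lemma A_eq: "D * fcat l1 l2 c \<theta> u + c * Gcat l1 l2 c \<theta> u = prim kk (phi0 u)"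
  unfolding fcat_eq Gcat_eq prim_kk by (simp add: power2_eq_square)

lemma Hcat_eq: "Hcat l1 l2 c \<theta> = prim kk pi"
  unfolding Hcat_def A_eq Ucat_eq by simp

end



lemma prim_diff:
  assumes "continuous_on UNIV g" "continuous_on UNIV h"
  shows "prim (\<lambda>p. g p - h p) x = prim g x - prim h x"
proof (rule deriv_eq_imp_eq[where a=0 and h="\<lambda>p. g p - h p" and f="prim (\<lambda>p. g p - h p)" and g="\<lambda>x. prim g x - prim h x"])
  have c: "continuous_on UNIV (\<lambda>p. g p - h p)" using assms by (intro continuous_intros)
  fix x show "(prim (\<lambda>p. g p - h p) has_real_derivative g x - h x) (at x)"
    by (rule prim_deriv[OF c])
  show "((\<lambda>x. prim g x - prim h x) has_real_derivative g x - h x) (at x)"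
    by (intro DERIV_diff prim_deriv assms)
qed simp

lemma prim_integral:
  assumes "continuous_on UNIV f" "0 \<le> x"
  shows "prim f x = integral {0..x} f"
  unfolding prim_def
  using interval_integral_eq_integral[of 0 x f] borel_integrable_atLeastAtMost'[of 0 x f]
    continuous_on_subset[OF assms(1)] assms(2)
  by (simp add: zero_ereal_def)

locale setc =
  fixes l1 l2 c :: real
  assumes l2pos: "0 < l2" and l21: "l2 \<le> l1" and c1: "1 \<le> c"
    and cL: "4 * l1\<^sup>2 \<le> c\<^sup>2"
begin

lemma cpos: "0 < c" using c1 by simp

lemma setting: "0 \<le> cos \<theta> \<Longrightarrow> setting l1 l2 c \<theta>"
  using l2pos l21 c1 cL by unfold_locales auto

abbreviation "B \<equiv> Bval l1 l2"

definition "KK t = prim (\<lambda>p. Kf c (B p) t) pi"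

lemma Kcont: "0 \<le> t \<Longrightarrow> t \<le> 1 \<Longrightarrow> continuous_on UNIV (\<lambda>p. Kf c (B p) t)"
proof -
  assume t: "0 \<le> t" "t \<le> 1"
  interpret S: setting l1 l2 c "arccos t" using setting t by simp
  show ?thesis using S.kk_cont t unfolding S.kk_def[abs_def] by simp
qed

lemma Bpos: "0 < B p" using setting.B_pos[OF setting[of 0]] by simp

lemma ptwB: "ptw c (B p)"
  using setting[of 0] setting.ptwB by simp

lemma KK_mono:
  assumes t: "0 \<le> t1" "t1 < t2" "t2 \<le> 1"
  shows "KK t2 < KK t1"
proof -
  have c1': "continuous_on UNIV (\<lambda>p. Kf c (B p) t1)" using Kcont t by simp
  have c2': "continuous_on UNIV (\<lambda>p. Kf c (B p) t2)" using Kcont t by simp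
  have "(t2 - t1) / (8 * c) * (pi - 0)
      \<le> prim (\<lambda>p. Kf c (B p) t1 - Kf c (B p) t2) pi - prim (\<lambda>p. Kf c (B p) t1 - Kf c (B p) t2) 0"
    by (rule prim_ge_const) (use c1' c2' ptw.K_mono[OF ptwB t] in \<open>auto intro: continuous_intros\<close>)
  moreover have "0 < (t2 - t1) / (8 * c) * (pi - 0)" using t cpos by simp
  ultimately show ?thesis unfolding KK_def using prim_diff[OF c1' c2'] by simp
qed

lemma KK_0: "0 < KK 0"
proof -
  have "l2\<^sup>2 / c ^ 3 * (pi - 0) \<le> prim (\<lambda>p. Kf c (B p) 0) pi - prim (\<lambda>p. Kf c (B p) 0) 0"
  proof (rule prim_ge_const)
    show "continuous_on UNIV (\<lambda>p. Kf c (B p) 0)" using Kcont by simp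
    fix p
    have "l2\<^sup>2 / c ^ 3 \<le> B p / c ^ 3"
      using setting.B_lb[OF setting[of 0]] cpos by (intro divide_right_mono) auto
    also have "\<dots> \<le> Kf c (B p) 0" by (rule ptw.K0_pos[OF ptwB])
    finally show "l2\<^sup>2 / c ^ 3 \<le> Kf c (B p) 0" .
  qed simp
  moreover have "0 < l2\<^sup>2 / c ^ 3 * (pi - 0)" using l2pos cpos by simp
  ultimately show ?thesis unfolding KK_def by simp
qed

lemma KK_1: "KK 1 < 0"
proof -
  have "prim (\<lambda>p. Kf c (B p) 1) pi - prim (\<lambda>p. Kf c (B p) 1) 0 \<le> (- 1 / (3 * c)) * (pi - 0)"
  proof (rule prim_le_const)
    show "continuous_on UNIV (\<lambda>p. Kf c (B p) 1)" using Kcont by simp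
    fix p show "Kf c (B p) 1 \<le> - 1 / (3 * c)" by (rule ptw.K1_neg[OF ptwB])
  qed simp
  moreover have "(- 1 / (3 * c)) * (pi - 0) < 0" using cpos by (simp add: divide_neg_pos mult_neg_pos)
  ultimately show ?thesis unfolding KK_def by simp
qed

lemma KK_cont: "continuous_on {0..1} KK"
proof -
  have eq: "KK t = integral (cbox 0 pi) (\<lambda>p. Kf c (B p) t)" if "t \<in> {0..1}" for t
    unfolding KK_def using prim_integral[OF Kcont] that by simp
  have "continuous_on ({0..1} \<times> cbox 0 pi) (\<lambda>(t, p). Kf c (B p) t)"
  proof -
    have nz: "\<forall>x\<in>{0..1::real} \<times> cbox 0 pi. B (snd x) * Ft c (B (snd x)) (fst x) \<noteq> 0"
    proof
      fix x :: "real \<times> real" assume "x \<in> {0..1::real} \<times> cbox 0 pi"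
      then have "0 \<le> fst x" "fst x \<le> 1" by auto
      then have "0 < Ft c (B (snd x)) (fst x)" by (rule ptw.F_pos[OF ptwB])
      then show "B (snd x) * Ft c (B (snd x)) (fst x) \<noteq> 0" using Bpos[of "snd x"] by simp
    qed
    have Bsnd: "continuous_on S (\<lambda>x. B (snd x))" for S :: "(real \<times> real) set"
      unfolding Bval_def by (intro continuous_intros)
    have hQ: "continuous_on ({0..1} \<times> cbox 0 pi) (\<lambda>x. Qf c (B (snd x)) (fst x))"
      unfolding Qf_def using cpos by (intro continuous_intros Bsnd) auto
    have nz2: "\<forall>x\<in>{0..1::real} \<times> cbox 0 pi. B (snd x) * sqrt (Qf c (B (snd x)) (fst x)) \<noteq> 0"
      using nz unfolding Ft_def .
    have "continuous_on ({0..1} \<times> cbox 0 pi) (\<lambda>x. Kf c (B (snd x)) (fst x))"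
      unfolding Kf_def Ft_def
      apply (intro continuous_intros Bsnd hQ)
      subgoal using cpos by simp
      subgoal using nz2 by simp
      subgoal using Bpos by (simp add: less_imp_neq[symmetric])
      done
    moreover have "(\<lambda>(t, p). Kf c (B p) t) = (\<lambda>x. Kf c (B (snd x)) (fst x))"
      by (rule ext) (simp add: case_prod_beta)
    ultimately show ?thesis by simp
  qed
  from integral_continuous_on_param[OF this] have "continuous_on {0..1} (\<lambda>t. integral (cbox 0 pi) (\<lambda>p. Kf c (B p) t))" .
  then show ?thesis by (rule continuous_on_eq) (simp add: eq)
qed

lemma KK_inj:
  assumes "0 \<le> s" "s \<le> 1" "0 \<le> r" "r \<le> 1" "KK s = KK r" shows "s = r"
proof (rule ccontr)
  assume "s \<noteq> r"
  then have "s < r \<or> r < s" by auto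
  then show False using KK_mono[of s r] KK_mono[of r s] assms by auto
qed

definition "t0 = (THE t. 0 < t \<and> t < 1 \<and> KK t = 0)"

lemma t0_prop: "0 < t0 \<and> t0 < 1 \<and> KK t0 = 0"
proof -
  have "\<exists>x. 0 \<le> x \<and> x \<le> 1 \<and> KK x = 0"
  proof (rule IVT2'[of KK 1 0 0])
    show "KK 1 \<le> 0" using KK_1 by (rule less_imp_le)
    show "0 \<le> KK 0" using KK_0 by (rule less_imp_le)
  qed (simp_all add: KK_cont)
  then obtain t where t: "0 \<le> t" "t \<le> 1" "KK t = 0" by blast
  have n0: "t \<noteq> 0" using t(3) KK_0 by (cases "t = 0") simp_all
  have n1: "t \<noteq> 1" using t(3) KK_1 by (cases "t = 1") simp_all
  have t': "0 < t" "t < 1" using t n0 n1 by linarith+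
  have uniq: "s = t" if s: "0 < s \<and> s < 1 \<and> KK s = 0" for s
  proof (rule KK_inj)
    show "KK s = KK t" using s t(3) by simp
  qed (use s t in linarith)+
  have "t0 = t" unfolding t0_def
  proof (rule the_equality)
    show "0 < t \<and> t < 1 \<and> KK t = 0" using t' t(3) by simp
  qed (rule uniq)
  then show ?thesis using t' t by simp
qed

lemma Hcat_KK: "0 \<le> cos \<theta> \<Longrightarrow> Hcat l1 l2 c \<theta> = KK (cos \<theta>)"
proof -
  assume "0 \<le> cos \<theta>"
  then interpret S: setting l1 l2 c \<theta> by (rule setting)
  show ?thesis using S.Hcat_eq unfolding KK_def S.kk_def[abs_def] by simp
qed

lemma theta_plus_pi: "theta_plus l1 c = pi"
proof -
  have l1p: "0 < l1" using l2pos l21 by simp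
  have "0 < l1\<^sup>2" using l1p by simp
  then have "2 * l1\<^sup>2 < c\<^sup>2" using cL by linarith
  moreover have s: "(sqrt 2 * l1)\<^sup>2 = 2 * l1\<^sup>2" by (simp add: power_mult_distrib)
  ultimately have "(sqrt 2 * l1)\<^sup>2 < c\<^sup>2" by linarith
  then have lt: "sqrt 2 * l1 < c" by (rule power_less_imp_less_base) (use cpos in linarith)
  show ?thesis unfolding theta_plus_def using lt by (simp only: if_True)
qed

lemma theta_tilde_eq: "theta_tilde l1 l2 c = arccos t0"
  unfolding theta_tilde_def
proof (rule the_equality)
  have t: "0 < t0" "t0 < 1" "KK t0 = 0" using t0_prop by auto
  have a1: "0 < arccos t0" using arccos_less_arccos[of t0 1] t by simp
  have a2: "arccos t0 < pi / 2" using arccos_less_arccos[of 0 t0] t by simp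
  show "0 < arccos t0 \<and> arccos t0 < pi / 2 \<and> arccos t0 < theta_plus l1 c \<and> Hcat l1 l2 c (arccos t0) = 0"
    using a1 a2 t theta_plus_pi Hcat_KK[of "arccos t0"] by simp
  fix \<theta> assume th: "0 < \<theta> \<and> \<theta> < pi / 2 \<and> \<theta> < theta_plus l1 c \<and> Hcat l1 l2 c \<theta> = 0"
  have c0: "0 < cos \<theta>" using th by (intro cos_gt_zero_pi) auto
  have c1': "cos \<theta> < 1" using cos_monotone_0_pi[of 0 \<theta>] th by simp
  have "Hcat l1 l2 c \<theta> = KK (cos \<theta>)" by (rule Hcat_KK) (use c0 in linarith)
  then have kk: "KK (cos \<theta>) = KK t0" using th t by simp
  have "cos \<theta> = t0" by (rule KK_inj[OF _ _ _ _ kk]) (use c0 c1' t in linarith)+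
  then show "\<theta> = arccos t0" using arccos_cos[of \<theta>] th by simp
qed

end



lemma term_bound:
  fixes l l2 a b m \<alpha> \<mu> :: real
  assumes "0 < l2" "l2 \<le> l" "\<bar>a\<bar> \<le> \<alpha>" "\<bar>b\<bar> \<le> 1" "\<bar>m\<bar> \<le> \<mu>"
  shows "\<bar>(1/l) * a * b * m\<bar> \<le> (1/l2) * \<alpha> * \<mu>"
proof -
  have l: "0 < l" using assms by linarith
  have "\<bar>(1/l) * a * b * m\<bar> = (1/l) * \<bar>a\<bar> * \<bar>b\<bar> * \<bar>m\<bar>" using l by (simp add: abs_mult)
  also have "\<dots> \<le> (1/l2) * \<alpha> * 1 * \<mu>"
  proof (intro mult_mono)
    show "1 / l \<le> 1 / l2" using assms l by (simp add: frac_le)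
  qed (use assms l in auto)
  finally show ?thesis by simp
qed

lemma comb_bound:
  fixes X1 X2 X3 X4 N n e :: real
  assumes "\<bar>X1\<bar> \<le> e" "\<bar>X2\<bar> \<le> e" "\<bar>X3\<bar> \<le> e" "\<bar>X4\<bar> \<le> e" "0 < n" "n \<le> N"
  shows "\<bar>- (1/N) * (X1 - X2 - X3 - X4)\<bar> \<le> 4 * e / n"
    and "\<bar>- (1/N) * (X1 - X2 + X3 + X4)\<bar> \<le> 4 * e / n"
proof -
  have N: "0 < N" using assms by linarith
  have e: "0 \<le> e" using assms(1) by linarith
  have s1: "\<bar>X1 - X2 - X3 - X4\<bar> \<le> 4 * e" using assms(1-4) by linarith
  have s2: "\<bar>X1 - X2 + X3 + X4\<bar> \<le> 4 * e" using assms(1-4) by linarith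
  have "\<bar>- (1/N) * (X1 - X2 - X3 - X4)\<bar> = \<bar>X1 - X2 - X3 - X4\<bar> / N" using N by (simp add: abs_mult)
  also have "\<dots> \<le> 4 * e / n" using s1 N assms(5,6) e by (intro frac_le) auto
  finally show "\<bar>- (1/N) * (X1 - X2 - X3 - X4)\<bar> \<le> 4 * e / n" .
  have "\<bar>- (1/N) * (X1 - X2 + X3 + X4)\<bar> = \<bar>X1 - X2 + X3 + X4\<bar> / N" using N by (simp add: abs_mult)
  also have "\<dots> \<le> 4 * e / n" using s2 N assms(5,6) e by (intro frac_le) auto
  finally show "\<bar>- (1/N) * (X1 - X2 + X3 + X4)\<bar> \<le> 4 * e / n" .
qed

lemma cosh_sinh_bound:
  fixes A :: real assumes "\<bar>A\<bar> \<le> 1"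
  shows "\<bar>cosh A\<bar> \<le> exp 1" "\<bar>sinh A\<bar> \<le> exp 1"
proof -
  have e1: "exp A \<le> exp 1" "exp (-A) \<le> exp 1" using assms by auto
  have p: "0 < exp A" "0 < exp (-A)" by auto
  have ce: "2 * cosh A = exp A + exp (-A)" by (simp add: cosh_def field_simps)
  have "cosh A \<le> exp 1" using ce e1 by linarith
  then show "\<bar>cosh A\<bar> \<le> exp 1" by simp
  have se: "2 * sinh A = exp A - exp (-A)" by (simp add: sinh_def field_simps)
  have "sinh A \<le> exp 1" "- exp 1 \<le> sinh A" using se e1 p by linarith+
  then show "\<bar>sinh A\<bar> \<le> exp 1" by (simp add: abs_le_iff)
qed

locale fin = setc +
  assumes big: "4 * pi * l1\<^sup>2 \<le> c\<^sup>2"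
begin

definition "th = theta_tilde l1 l2 c"

lemma t0: "0 < t0" "t0 < 1" "KK t0 = 0" using t0_prop by auto

lemma cos_th: "cos th = t0"
  unfolding th_def theta_tilde_eq using t0 by simp

lemma sin_th: "sin th = sqrt (1 - t0\<^sup>2)"
proof -
  have "0 \<le> th" "th \<le> pi" unfolding th_def theta_tilde_eq using t0
    by (auto intro: arccos_lbound arccos_ubound)
  then have "0 \<le> sin th" by (rule sin_ge_zero)
  then show ?thesis using sin_squared_eq[of th] cos_th by (metis real_sqrt_unique)
qed

lemma sin_th_pos: "0 < sin th"
proof -
  have "t0\<^sup>2 < 1" using t0 by (simp add: power_less_one_iff abs_less_iff)
  then show ?thesis unfolding sin_th by simp
qed

lemma sin_th_le: "sin th \<le> 1" by simp

sublocale S: setting l1 l2 c th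
  using setting[of th] cos_th t0 by simp

abbreviation "W \<equiv> prim S.kk"

lemma kk_per: "S.kk (p + pi) = S.kk p"
  unfolding S.kk_def Bval_periodic ..

lemma W_pi: "W pi = 0"
  using t0(3) unfolding KK_def S.kk_def[abs_def] cos_th .

lemma W_per: "W (x + pi) = W x"
proof (rule deriv_eq_imp_eq[where a=0 and h=S.kk and f="\<lambda>x. W (x + pi)" and g=W])
  fix x
  show "((\<lambda>x. W (x + pi)) has_real_derivative S.kk x) (at x)"
    using DERIV_chain2[OF prim_deriv[OF S.kk_cont] DERIV_add[OF DERIV_ident DERIV_const[of pi]]]
    by (simp add: kk_per)
  show "(W has_real_derivative S.kk x) (at x)" by (rule prim_deriv[OF S.kk_cont])
qed (simp add: W_pi)

lemma W_per_nat: "W (x + real n * pi) = W x"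
proof (induction n)
  case (Suc n)
  have "W (x + real (Suc n) * pi) = W ((x + real n * pi) + pi)" by (simp add: algebra_simps)
  also have "\<dots> = W x" using W_per Suc by simp
  finally show ?case .
qed simp

lemma W_red: "\<exists>y. 0 \<le> y \<and> y \<le> pi \<and> W x = W y"
proof -
  define n where "n = \<lfloor>x / pi\<rfloor>"
  define y where "y = x - n * pi"
  have "n \<le> x / pi" "x / pi < n + 1" unfolding n_def by linarith+
  then have y: "0 \<le> y" "y \<le> pi" unfolding y_def using pi_gt_zero
    by (auto simp: field_simps)
  have "W x = W y"
  proof (cases "0 \<le> n")
    case True
    then have "x = y + real (nat n) * pi" unfolding y_def by simp
    then show ?thesis using W_per_nat by simp
  next
    case False
    then have "y = x + real (nat (- n)) * pi" unfolding y_def by simp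
    then show ?thesis using W_per_nat by simp
  qed
  then show ?thesis using y by blast
qed

definition "P = 4 * (1 - t0\<^sup>2) * l1\<^sup>2 / c ^ 3"

lemma P_nonneg: "0 \<le> P"
proof -
  have "t0\<^sup>2 \<le> 1" using t0 by (simp add: power_le_one)
  then show ?thesis unfolding P_def using cpos by simp
qed

lemma kk_le: "S.kk p \<le> P"
proof -
  have "S.kk p \<le> 4 * (1 - t0\<^sup>2) * B p / c ^ 3"
    unfolding S.kk_def cos_th using ptw.K_ub[OF ptwB] t0 by simp
  also have "\<dots> \<le> P" unfolding P_def
  proof (intro divide_right_mono mult_left_mono)
    show "B p \<le> l1\<^sup>2" by (rule S.B_ub)
    have "t0\<^sup>2 \<le> 1" using t0 by (simp add: power_le_one)
    then show "0 \<le> 4 * (1 - t0\<^sup>2)" by simp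
  qed (use cpos in simp)
  finally show ?thesis .
qed

lemma W_bound: "\<bar>W x\<bar> \<le> P * pi"
proof -
  obtain y where y: "0 \<le> y" "y \<le> pi" "W x = W y" using W_red by blast
  have "W y - W 0 \<le> P * (y - 0)" by (rule prim_le_const[OF S.kk_cont kk_le y(1)])
  moreover have "P * y \<le> P * pi" using y P_nonneg by (intro mult_left_mono) auto
  ultimately have u: "W y \<le> P * pi" by simp
  have "W pi - W y \<le> P * (pi - y)" by (rule prim_le_const[OF S.kk_cont kk_le y(2)])
  then have l: "- (P * pi) \<le> W y" using y P_nonneg W_pi
    by (smt (verit) mult_left_mono)
  show ?thesis using u l y by (simp add: abs_le_iff)
qed

lemma D_pos: "0 < Dc c th" unfolding Dc_def using sin_th_pos cpos by simp
lemma D_le: "Dc c th \<le> 1 / c" unfolding Dc_def using sin_th_le cpos by (simp add: divide_right_mono)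

end



context fin begin

lemma L_le: "l1\<^sup>2 \<le> c\<^sup>2"
  using cL zero_le_power2[of l1] by linarith

lemma point_bound:
  assumes x3z: "snd (snd (Xmap l1 l2 c th z)) = 0"
  shows "\<bar>fst (Xmap l1 l2 c th z)\<bar> \<le> 4 * (3 * exp 1 * l1\<^sup>2 / l2) / (c\<^sup>2 * l2\<^sup>2)"
    and "\<bar>fst (snd (Xmap l1 l2 c th z))\<bar> \<le> 4 * (3 * exp 1 * l1\<^sup>2 / l2) / (c\<^sup>2 * l2\<^sup>2)"
proof -
  define u where "u = Re z"
  define v where "v = Im z"
  define D where "D = Dc c th"
  define ph where "ph = phi l1 l2 c th u"
  define ph' where "ph' = phid l1 l2 c th u"
  define Bq where "Bq = Bfun l1 l2 c th u"
  define f where "f = fcat l1 l2 c th u"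
  define f' where "f' = D * Bq"
  define x3 where "x3 = - l1 * l2 * D * v + l1 * l2 * Gcat l1 l2 c th u"
  define A where "A = f + c * v"
  define M1 where "M1 = c * cos x3 * cosh A - l1 * l2 * D * sin x3 * sinh A"
  define M2 where "M2 = c * cos x3 * sinh A - l1 * l2 * D * sin x3 * cosh A"
  define M3 where "M3 = c * sin x3 * sinh A + l1 * l2 * D * cos x3 * cosh A"
  define M4 where "M4 = c * sin x3 * cosh A + l1 * l2 * D * cos x3 * sinh A"
  define N where "N = (c\<^sup>2 + l1\<^sup>2 * l2\<^sup>2 * D\<^sup>2) * Bq"
  define x1 where "x1 = - (1 / N) * ((1 / l1) * f' * cos ph * M1 - (1 / l1) * (c - ph') * sin ph * M2
                           - (1 / l2) * (c - ph') * cos ph * M3 - (1 / l2) * f' * sin ph * M4)"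
  define x2 where "x2 = - (1 / N) * ((1 / l1) * f' * cos ph * M4 - (1 / l1) * (c - ph') * sin ph * M3
                           + (1 / l2) * (c - ph') * cos ph * M2 + (1 / l2) * f' * sin ph * M1)"
  have X: "Xmap l1 l2 c th z = (x1, x2, x3)"
    unfolding Xmap_def Let_def x1_def x2_def x3_def N_def M1_def M2_def M3_def M4_def A_def
      f'_def f_def Bq_def ph'_def ph_def D_def u_def v_def ..
  have x30: "x3 = 0" using x3z X by simp
  have l1p: "0 < l1" using l2pos l21 by linarith
  have Dp: "0 < D" and Dle: "D \<le> 1 / c" using D_pos D_le by (auto simp: D_def)
  have Dv: "D * v = Gcat l1 l2 c th u"
  proof -
    have "l1 * l2 * (Gcat l1 l2 c th u - D * v) = 0" using x30 unfolding x3_def by (simp add: algebra_simps)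
    then show ?thesis using l1p l2pos by simp
  qed
  have DA: "D * A = W (S.phi0 u)"
  proof -
    have "D * A = D * f + c * (D * v)" unfolding A_def by (simp add: algebra_simps)
    also have "\<dots> = D * fcat l1 l2 c th u + c * Gcat l1 l2 c th u" by (simp only: Dv f_def)
    also have "\<dots> = W (S.phi0 u)" unfolding D_def by (rule S.A_eq)
    finally show ?thesis .
  qed
  define s where "s = sin th"
  have sp: "0 < s" "s \<le> 1" using sin_th_pos sin_th_le by (auto simp: s_def)
  have s2: "s\<^sup>2 = 1 - t0\<^sup>2"
    unfolding s_def sin_th using t0 by (simp add: power_le_one abs_le_iff)
  have Ds: "D = s / c" unfolding D_def s_def Dc_def ..
  have "P * pi = (s / c) * (s * (4 * pi * l1\<^sup>2) / c\<^sup>2)"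
    unfolding P_def s2[symmetric] using cpos by (simp add: field_simps power2_eq_square power3_eq_cube)
  also have "\<dots> \<le> (s / c) * 1"
  proof (rule mult_left_mono)
    have "s * (4 * pi * l1\<^sup>2) \<le> 1 * (4 * pi * l1\<^sup>2)" using sp by (intro mult_right_mono) auto
    also have "\<dots> \<le> c\<^sup>2" using big by simp
    finally show "s * (4 * pi * l1\<^sup>2) / c\<^sup>2 \<le> 1" using cpos by simp
  qed (use sp cpos in simp)
  finally have "D * \<bar>A\<bar> \<le> D * 1" using DA W_bound[of "S.phi0 u"] Dp Ds by (simp add: abs_mult)
  then have Ab: "\<bar>A\<bar> \<le> 1" using Dp by simp
  have chA: "\<bar>cosh A\<bar> \<le> exp 1" and shA: "\<bar>sinh A\<bar> \<le> exp 1" using cosh_sinh_bound[OF Ab] by auto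
  have Bq: "Bq = B (S.phi0 u)" unfolding Bq_def S.Bfun_eq ..
  have Bql: "l2\<^sup>2 \<le> Bq" and Bqu: "Bq \<le> l1\<^sup>2" unfolding Bq using S.B_lb S.B_ub by auto
  have Bqp: "0 < Bq" using Bq S.B_pos by simp
  have f'b: "\<bar>f'\<bar> \<le> 3 * l1\<^sup>2 / c"
  proof -
    have "\<bar>f'\<bar> = D * Bq" unfolding f'_def using Dp Bqp by simp
    also have "\<dots> \<le> (1 / c) * l1\<^sup>2" using Dle Bqu Dp Bqp cpos by (intro mult_mono) auto
    also have "\<dots> \<le> 3 * l1\<^sup>2 / c" using cpos by (simp add: divide_right_mono)
    finally show ?thesis .
  qed
  have cpb: "\<bar>c - ph'\<bar> \<le> 3 * l1\<^sup>2 / c"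
  proof -
    have "ph' = Ft c Bq t0" unfolding ph'_def S.phid_eq S.rhs_eq cos_th Bq ..
    then have "\<bar>c - ph'\<bar> \<le> 3 * Bq / c"
      using ptw.cF_abs[OF ptwB[of "S.phi0 u"], of t0] t0 Bqu L_le unfolding Bq by simp
    also have "\<dots> \<le> 3 * l1\<^sup>2 / c" using Bqu cpos by (simp add: divide_right_mono)
    finally show ?thesis .
  qed
  have M34: "\<bar>l1 * l2 * D * w\<bar> \<le> exp 1 * c" if w: "\<bar>w\<bar> \<le> exp 1" for w
  proof -
    have "\<bar>l1 * l2 * D * w\<bar> = (l1 * l2) * D * \<bar>w\<bar>" using l1p l2pos Dp by (simp add: abs_mult)
    also have "\<dots> \<le> l1\<^sup>2 * (1 / c) * exp 1"
    proof (intro mult_mono)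
      show "l1 * l2 \<le> l1\<^sup>2" using l1p l21 by (simp add: power2_eq_square)
    qed (use Dle w l1p l2pos Dp cpos in auto)
    also have "\<dots> \<le> c\<^sup>2 * (1 / c) * exp 1" using L_le cpos by (intro mult_right_mono) auto
    also have "\<dots> = exp 1 * c" using cpos by (simp add: power2_eq_square)
    finally show ?thesis .
  qed
  have M12: "\<bar>c * w\<bar> \<le> exp 1 * c" if w: "\<bar>w\<bar> \<le> exp 1" for w
    using w cpos by (simp add: abs_mult mult.commute)
  have M1b: "\<bar>M1\<bar> \<le> exp 1 * c" unfolding M1_def x30 using M12[OF chA] by simp
  have M2b: "\<bar>M2\<bar> \<le> exp 1 * c" unfolding M2_def x30 using M12[OF shA] by simp
  have M3b: "\<bar>M3\<bar> \<le> exp 1 * c" unfolding M3_def x30 using M34[OF chA] by simp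
  have M4b: "\<bar>M4\<bar> \<le> exp 1 * c" unfolding M4_def x30 using M34[OF shA] by simp
  have Nb: "c\<^sup>2 * l2\<^sup>2 \<le> N"
  proof -
    have "c\<^sup>2 * l2\<^sup>2 \<le> (c\<^sup>2 + l1\<^sup>2 * l2\<^sup>2 * D\<^sup>2) * Bq"
      using Bql by (intro mult_mono) auto
    then show ?thesis unfolding N_def .
  qed
  have np: "0 < c\<^sup>2 * l2\<^sup>2" using cpos l2pos by simp
  have e: "(1 / l2) * (3 * l1\<^sup>2 / c) * (exp 1 * c) = 3 * exp 1 * l1\<^sup>2 / l2"
    using cpos by (simp add: field_simps)
  have cosb: "\<bar>cos ph\<bar> \<le> 1" and sinb: "\<bar>sin ph\<bar> \<le> 1" by auto
  note tb = term_bound[OF l2pos, of _ _ "3 * l1\<^sup>2 / c" _ _ "exp 1 * c", unfolded e]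
  have T: "\<bar>(1 / l1) * f' * cos ph * M1\<bar> \<le> 3 * exp 1 * l1\<^sup>2 / l2"
          "\<bar>(1 / l1) * (c - ph') * sin ph * M2\<bar> \<le> 3 * exp 1 * l1\<^sup>2 / l2"
          "\<bar>(1 / l2) * (c - ph') * cos ph * M3\<bar> \<le> 3 * exp 1 * l1\<^sup>2 / l2"
          "\<bar>(1 / l2) * f' * sin ph * M4\<bar> \<le> 3 * exp 1 * l1\<^sup>2 / l2"
          "\<bar>(1 / l1) * f' * cos ph * M4\<bar> \<le> 3 * exp 1 * l1\<^sup>2 / l2"
          "\<bar>(1 / l1) * (c - ph') * sin ph * M3\<bar> \<le> 3 * exp 1 * l1\<^sup>2 / l2"
          "\<bar>(1 / l2) * (c - ph') * cos ph * M2\<bar> \<le> 3 * exp 1 * l1\<^sup>2 / l2"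
          "\<bar>(1 / l2) * f' * sin ph * M1\<bar> \<le> 3 * exp 1 * l1\<^sup>2 / l2"
    by (intro tb l21 order_refl f'b cpb cosb sinb M1b M2b M3b M4b)+
  have "\<bar>x1\<bar> \<le> 4 * (3 * exp 1 * l1\<^sup>2 / l2) / (c\<^sup>2 * l2\<^sup>2)"
    unfolding x1_def by (rule comb_bound(1)[OF T(1-4) np Nb])
  moreover have "\<bar>x2\<bar> \<le> 4 * (3 * exp 1 * l1\<^sup>2 / l2) / (c\<^sup>2 * l2\<^sup>2)"
    unfolding x2_def by (rule comb_bound(2)[OF T(5-8) np Nb])
  ultimately show "\<bar>fst (Xmap l1 l2 c th z)\<bar> \<le> 4 * (3 * exp 1 * l1\<^sup>2 / l2) / (c\<^sup>2 * l2\<^sup>2)"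
    and "\<bar>fst (snd (Xmap l1 l2 c th z))\<bar> \<le> 4 * (3 * exp 1 * l1\<^sup>2 / l2) / (c\<^sup>2 * l2\<^sup>2)"
    using X by simp_all
qed

end



context fin begin

definition "Kc = 2 * (4 * (3 * exp 1 * l1\<^sup>2 / l2) / l2\<^sup>2)"

lemma Gamma_bound:
  assumes "p \<in> Gamma l1 l2 c"
  shows "(\<lambda>(x1, x2, x3). sqrt (x1\<^sup>2 + x2\<^sup>2)) p \<le> Kc / c\<^sup>2"
proof -
  from assms obtain z where p: "p = Xmap l1 l2 c th z" and z: "snd (snd p) = 0"
    unfolding Gamma_def catenoid_def th_def by auto
  have b1: "\<bar>fst p\<bar> \<le> 4 * (3 * exp 1 * l1\<^sup>2 / l2) / (c\<^sup>2 * l2\<^sup>2)"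
    using point_bound(1)[of z] p z by simp
  have b2: "\<bar>fst (snd p)\<bar> \<le> 4 * (3 * exp 1 * l1\<^sup>2 / l2) / (c\<^sup>2 * l2\<^sup>2)"
    using point_bound(2)[of z] p z by simp
  have eq: "4 * (3 * exp 1 * l1\<^sup>2 / l2) / (c\<^sup>2 * l2\<^sup>2) = (Kc / c\<^sup>2) / 2"
    unfolding Kc_def by (simp add: field_simps)
  have "(\<lambda>(x1, x2, x3). sqrt (x1\<^sup>2 + x2\<^sup>2)) p = sqrt ((fst p)\<^sup>2 + (fst (snd p))\<^sup>2)"
    by (cases p) auto
  also have "\<dots> \<le> \<bar>fst p\<bar> + \<bar>fst (snd p)\<bar>" by (rule sqrt_sum_squares_le_sum_abs)
  also have "\<dots> \<le> Kc / c\<^sup>2" using b1 b2 unfolding eq by linarith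
  finally show ?thesis .
qed

lemma Gamma_ne: "Xmap l1 l2 c th 0 \<in> Gamma l1 l2 c"
proof -
  have "Gcat l1 l2 c th 0 = 0" using S.Gcat_eq[of 0] S.phi0_0 by simp
  then have "snd (snd (Xmap l1 l2 c th 0)) = 0" by (simp add: Xmap_def Let_def)
  then show ?thesis unfolding Gamma_def catenoid_def th_def by auto
qed

end

theorem proposition6p2:
  fixes l1 l2 :: real
  assumes "(l1 > l2 \<and> l2 > 0) \<or> (l1 = 1 \<and> l2 = 1)"
  shows "(\<forall>\<^sub>F c in at_top.
            bdd_above ((\<lambda>(x1, x2, x3). sqrt (x1\<^sup>2 + x2\<^sup>2)) ` Gamma l1 l2 c))
       \<and> ((\<lambda>c. SUP (x1, x2, x3)\<in>Gamma l1 l2 c. sqrt (x1\<^sup>2 + x2\<^sup>2)) \<longlongrightarrow> 0) at_top"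
proof -
  have l2p: "0 < l2" and l21: "l2 \<le> l1" using assms by auto
  define val :: "real \<times> real \<times> real \<Rightarrow> real" where "val = (\<lambda>(x1, x2, x3). sqrt (x1\<^sup>2 + x2\<^sup>2))"
  define c0 where "c0 = 1 + 4 * pi * l1\<^sup>2"
  define K where "K = 2 * (4 * (3 * exp 1 * l1\<^sup>2 / l2) / l2\<^sup>2)"
  have fin: "fin l1 l2 c" if c: "c0 \<le> c" for c
  proof -
    have L0: "0 \<le> 4 * pi * l1\<^sup>2" by simp
    have c1: "1 \<le> c" using c L0 unfolding c0_def by linarith
    have "c * 1 \<le> c * c" using c1 by (intro mult_left_mono) auto
    then have cc: "c \<le> c\<^sup>2" by (simp add: power2_eq_square)
    have big: "4 * pi * l1\<^sup>2 \<le> c\<^sup>2" using c cc unfolding c0_def by linarith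
    have "4 * l1\<^sup>2 \<le> 4 * pi * l1\<^sup>2" using pi_ge_two by (intro mult_right_mono) auto
    then have "4 * l1\<^sup>2 \<le> c\<^sup>2" using big by linarith
    then show ?thesis using l2p l21 c1 big by unfold_locales auto
  qed
  have ev: "\<forall>\<^sub>F c in at_top. c0 \<le> c" by (rule eventually_ge_at_top)
  have props: "bdd_above (val ` Gamma l1 l2 c) \<and> 0 \<le> Sup (val ` Gamma l1 l2 c)
      \<and> Sup (val ` Gamma l1 l2 c) \<le> K / c\<^sup>2" if c: "c0 \<le> c" for c
  proof -
    interpret F: fin l1 l2 c by (rule fin[OF c])
    have bnd: "\<And>p. p \<in> Gamma l1 l2 c \<Longrightarrow> val p \<le> K / c\<^sup>2"
      using F.Gamma_bound unfolding val_def K_def F.Kc_def by blast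
    have bdd: "bdd_above (val ` Gamma l1 l2 c)" using bnd by (rule bdd_aboveI2)
    have ne: "Gamma l1 l2 c \<noteq> {}" using F.Gamma_ne by blast
    have "val (Xmap l1 l2 c F.th 0) \<le> Sup (val ` Gamma l1 l2 c)"
      using cSUP_upper[OF F.Gamma_ne bdd] .
    moreover have "0 \<le> val (Xmap l1 l2 c F.th 0)" unfolding val_def by (simp add: case_prod_beta)
    moreover have "Sup (val ` Gamma l1 l2 c) \<le> K / c\<^sup>2" using ne bnd by (rule cSUP_least)
    ultimately show ?thesis using bdd by linarith
  qed
  have lim: "((\<lambda>c::real. K / c\<^sup>2) \<longlongrightarrow> 0) at_top"
    by (intro tendsto_divide_0[OF tendsto_const] filterlim_at_top_imp_at_infinity
        filterlim_pow_at_top filterlim_ident) simp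
  have "\<forall>\<^sub>F c in at_top. bdd_above (val ` Gamma l1 l2 c)"
    by (rule eventually_mono[OF ev]) (rule props[THEN conjunct1])
  moreover have "((\<lambda>c. Sup (val ` Gamma l1 l2 c)) \<longlongrightarrow> 0) at_top"
  proof (rule tendsto_sandwich[OF _ _ tendsto_const lim])
    show "\<forall>\<^sub>F c in at_top. 0 \<le> Sup (val ` Gamma l1 l2 c)"
      by (rule eventually_mono[OF ev]) (rule props[THEN conjunct2, THEN conjunct1])
    show "\<forall>\<^sub>F c in at_top. Sup (val ` Gamma l1 l2 c) \<le> K / c\<^sup>2"
      by (rule eventually_mono[OF ev]) (rule props[THEN conjunct2, THEN conjunct2])
  qed
  ultimately show ?thesis unfolding val_def by simp
qed


end
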